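(* Fix unit vectors $A,B,C\in\mathbb S^2\subset\operatorname{Im}\mathbb H$. Let $\bar\nu:\mathbb S^2\times\mathbb S^2\to\mathbb R^3$, $\bar\nu(x,y)=(x\cdot y,x\cdot C,y\cdot C)$, let $\pi_X:\mathbb S^3\to\mathbb S^2$, $\pi_X(p)=\bar pXp$, let $\nu=\bar\nu\circ(\pi_A\times\pi_B):\mathbb S^3\times\mathbb S^3\to\mathbb R^3$, and let $\Delta=\bar\nu(\mathbb S^2\times\mathbb S^2)$, with interior $\mathring\Delta$, boundary $\partial\Delta$, and $V=\{(1,1,1),(1,-1,-1),(-1,1,-1),(-1,-1,1)\}$. For $(x,y)\in\mathbb S^2\times\mathbb S^2$: (1) if $\dim\operatorname{Span}\{x,y,C\}=1$, then $\bar\nu(x,y)\in V$, $\bar\nu^{-1}(\bar\nu(x,y))=\{(x,y)\}$, and $\nu^{-1}(\bar\nu(x,y))$ is a $2$-torus; (2) if $\dim\operatorname{Span}\{x,y,C\}=2$, then $\bar\nu(x,y)\in\partial\Delta\setminus V$, $\bar\nu^{-1}(\bar\nu(x,y))$ is a circle, and $\nu^{-1}(\bar\nu(x,y))$ is a $3$-torus; (3) if $\dim\operatorname{Span}\{x,y,C\}=3$, then $\bar\nu(x,y)\in\mathring\Delta$, $\bar\nu^{-1}(\bar\nu(x,y))$ is a disjoint union of two circles, and $\nu^{-1}(\bar\nu(x,y))$ is a disjoint union of two $3$-tori. Moreover the four points with $x,y\in\{\pm C\}$ map bijectively onto $V$: $\bar\nu(C,C)=(1,1,1)$, $\bar\nu(C,-C)=(-1,1,-1)$,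 $\bar\nu(-C,C)=(-1,-1,1)$, $\bar\nu(-C,-C)=(1,-1,-1)$.
   Context: $\mathbb S^3$ is the unit quaternions, $\mathbb S^2$ the unit imaginary quaternions, $\cdot$ the Euclidean inner product on $\operatorname{Im}\mathbb H\cong\mathbb R^3$. The map $\pi_A\times\pi_B$ is a $\mathbb T^2$-bundle (each $\pi_X$ is a circle bundle, a Hopf fibration). $\nu$ is the multi-moment map of the $\mathbb T^3$-action $(p,q)\mapsto(e^{At_1}pe^{-Ct_3},e^{Bt_2}qe^{-Ct_3})$ on the homogeneous nearly Kähler $\mathbb S^3\times\mathbb S^3$, in a suitable basis of $\Lambda^2\mathfrak t^*\cong\mathbb R^3$. *)

theory Defs
  imports "HOL-Analysis.Analysis"
begin

text \<open>Quaternions H = R + Im H, modelled as pairs (real part, imaginary part in real^3).\<close>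
type_synonym quat = "real \<times> (real^3)"

definition qmult :: "quat \<Rightarrow> quat \<Rightarrow> quat" where
  "qmult p q = (fst p * fst q - snd p \<bullet> snd q,
                fst p *\<^sub>R snd q + fst q *\<^sub>R snd p + cross3 (snd p) (snd q))"

definition qconj :: "quat \<Rightarrow> quat" where
  "qconj p = (fst p, - snd p)"

definition S3 :: "quat set" where "S3 = sphere 0 1"
definition S2 :: "(real^3) set" where "S2 = sphere 0 1"

text \<open>Hopf map pi_X(p) = conj(p) X p (imaginary part; the real part vanishes).\<close>
definition hopf :: "real^3 \<Rightarrow> quat \<Rightarrow> real^3" where
  "hopf X p = snd (qmult (qmult (qconj p) (0, X)) p)"

definition nubar :: "real^3 \<Rightarrow> real^3 \<Rightarrow> real^3 \<Rightarrow> real \<times> real \<times> real" where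
  "nubar C x y = (x \<bullet> y, x \<bullet> C, y \<bullet> C)"

definition nu :: "real^3 \<Rightarrow> real^3 \<Rightarrow> real^3 \<Rightarrow> quat \<Rightarrow> quat \<Rightarrow> real \<times> real \<times> real" where
  "nu A B C p q = nubar C (hopf A p) (hopf B q)"

definition Delta :: "real^3 \<Rightarrow> (real \<times> real \<times> real) set" where
  "Delta C = (\<lambda>(x, y). nubar C x y) ` (S2 \<times> S2)"

definition Vset :: "(real \<times> real \<times> real) set" where
  "Vset = {(1, 1, 1), (1, -1, -1), (-1, 1, -1), (-1, -1, 1)}"

definition nubar_fibre :: "real^3 \<Rightarrow> real \<times> real \<times> real \<Rightarrow> ((real^3) \<times> (real^3)) set" where
  "nubar_fibre C z = {(x, y). x \<in> S2 \<and> y \<in> S2 \<and> nubar C x y = z}"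

definition nu_fibre :: "real^3 \<Rightarrow> real^3 \<Rightarrow> real^3 \<Rightarrow> real \<times> real \<times> real \<Rightarrow> (quat \<times> quat) set" where
  "nu_fibre A B C z = {(p, q). p \<in> S3 \<and> q \<in> S3 \<and> nu A B C p q = z}"

definition circle :: "complex set" where "circle = sphere 0 1"

definition is_circle :: "'a::topological_space set \<Rightarrow> bool" where
  "is_circle S \<longleftrightarrow> S homeomorphic circle"

definition is_2torus :: "'a::topological_space set \<Rightarrow> bool" where
  "is_2torus S \<longleftrightarrow> S homeomorphic (circle \<times> circle)"

definition is_3torus :: "'a::topological_space set \<Rightarrow> bool" where
  "is_3torus S \<longleftrightarrow> S homeomorphic (circle \<times> circle \<times> circle)"

definition is_two_circles :: "'a::topological_space set \<Rightarrow> bool" where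
  "is_two_circles S \<longleftrightarrow> S homeomorphic (circle \<times> {0::real, 1})"

definition is_two_3tori :: "'a::topological_space set \<Rightarrow> bool" where
  "is_two_3tori S \<longleftrightarrow> S homeomorphic ((circle \<times> circle \<times> circle) \<times> {0::real, 1})"

end

theory Submission
  imports Defs
begin


lemmas qsimps = qmult_def qconj_def prod_eq_iff vec_eq_iff forall_3 cross3_def inner_vec_def sum_3 vector_def

definition qn :: "quat \<Rightarrow> real" where "qn p = fst p ^ 2 + snd p \<bullet> snd p"
definition eq :: "real^3 \<Rightarrow> complex \<Rightarrow> quat" where "eq X w = (Re w, Im w *\<^sub>R X)"

lemma qmult_assoc: "qmult (qmult p q) r = qmult p (qmult q r)"
  by (simp add: qsimps algebra_simps)

lemma hopf_formula: "hopf X (a,u) = (a^2 - u\<bullet>u) *\<^sub>R X + (2*(u\<bullet>X)) *\<^sub>R u + (2*a) *\<^sub>R (cross3 X u)"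
  by (simp add: hopf_def qsimps algebra_simps power2_eq_square)

lemma hopf_full: "qmult (qmult (qconj p) (0,X)) p = (0, hopf X p)"
  by (simp add: hopf_def qsimps algebra_simps)

lemma hopf_mult: "hopf X (qmult p q) = hopf (hopf X p) q"
  by (simp add: hopf_def qsimps algebra_simps)

lemma hopf_scale: "hopf X (c *\<^sub>R p) = (c^2) *\<^sub>R hopf X p"
  by (simp add: hopf_def qsimps algebra_simps power2_eq_square)

lemma hopf_dot: "hopf X p \<bullet> hopf Y p = (qn p)^2 * (X \<bullet> Y)"
  by (simp add: hopf_def qn_def qsimps algebra_simps power2_eq_square)

lemma qn_mult: "qn (qmult p q) = qn p * qn q"
  by (simp add: qn_def qsimps algebra_simps power2_eq_square)

lemma qn_conj[simp]: "qn (qconj p) = qn p"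
  by (simp add: qn_def qconj_def)

lemma qconj_mult_self: "qmult (qconj p) p = (qn p, 0)"
  by (simp add: qn_def qsimps algebra_simps power2_eq_square)

lemma qmult_conj_self: "qmult p (qconj p) = (qn p, 0)"
  by (simp add: qn_def qsimps algebra_simps power2_eq_square)

lemma qmult_one_left[simp]: "qmult (1,0) p = p"
  by (simp add: qsimps)

lemma qmult_one_right[simp]: "qmult p (1,0) = p"
  by (simp add: qsimps)

lemma S3_iff: "p \<in> S3 \<longleftrightarrow> qn p = 1"
proof -
  have "norm p = sqrt (qn p)" by (cases p) (simp add: norm_Pair qn_def power2_norm_eq_inner)
  moreover have "qn p \<ge> 0" by (simp add: qn_def)
  ultimately show ?thesis by (auto simp: S3_def)
qed

lemma S2_iff: "x \<in> S2 \<longleftrightarrow> x \<bullet> x = 1"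
  by (simp add: S2_def norm_eq_1)

lemma qcancel_right:
  assumes "qn p = 1" "qmult a p = qmult b p" shows "a = b"
proof -
  have "qmult (qmult a p) (qconj p) = qmult (qmult b p) (qconj p)" using assms by simp
  thus ?thesis by (simp add: qmult_assoc qmult_conj_self assms(1))
qed

lemma cross_cross_id: "cross3 A (cross3 A u) = (A \<bullet> u) *\<^sub>R A - (A \<bullet> A) *\<^sub>R u"
  by (simp add: qsimps algebra_simps)

lemma commute_imag:
  assumes "qmult r (0,A) = qmult (0,A) r" "A \<bullet> A = 1"
  shows "snd r = (A \<bullet> snd r) *\<^sub>R A"
proof -
  have "cross3 (snd r) A = cross3 A (snd r)" using assms(1) by (simp add: qmult_def prod_eq_iff)
  hence "cross3 A (snd r) = 0" by (auto simp: qsimps algebra_simps)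
  hence "cross3 A (cross3 A (snd r)) = 0" by simp
  thus ?thesis using cross_cross_id[of A "snd r"] assms(2) by simp
qed

lemma hopf_eq_gen: "hopf A (eq A w) = ((Re w)^2 + (Im w)^2 * (A \<bullet> A)) *\<^sub>R A"
  by (simp add: hopf_def eq_def qsimps algebra_simps power2_eq_square)

lemma hopf_eq_A: "A \<bullet> A = 1 \<Longrightarrow> cmod w = 1 \<Longrightarrow> hopf A (eq A w) = A"
proof -
  assume a: "A \<bullet> A = 1" "cmod w = 1"
  hence "(Re w)^2 + (Im w)^2 = 1" by (simp add: cmod_def)
  thus ?thesis using a by (simp add: hopf_eq_gen)
qed

lemma qn_eq: "A \<bullet> A = 1 \<Longrightarrow> cmod w = 1 \<Longrightarrow> qn (eq A w) = 1"
  by (simp add: qn_def eq_def cmod_def power2_eq_square)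

lemma hopf_fibre:
  assumes A: "A \<bullet> A = 1" and p: "qn p = 1" and p0: "qn p0 = 1" and h: "hopf A p = hopf A p0"
  shows "\<exists>w. cmod w = 1 \<and> p = qmult (eq A w) p0"
proof -
  define r where "r = qmult p (qconj p0)"
  have P: "qmult (qmult (qconj p) (0,A)) p = qmult (qmult (qconj p0) (0,A)) p0"
    using h by (simp add: hopf_full)
  have "qmult p (qmult (qmult (qmult (qconj p) (0,A)) p) (qconj p0)) = qmult (0,A) r"
    by (simp add: r_def qmult_assoc[symmetric] qmult_conj_self p)
  moreover have "qmult p (qmult (qmult (qmult (qconj p0) (0,A)) p0) (qconj p0)) = qmult r (0,A)"
    by (simp add: r_def qmult_assoc qmult_conj_self p0)
  ultimately have "qmult r (0,A) = qmult (0,A) r" using P by simp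
  hence sr: "snd r = (A \<bullet> snd r) *\<^sub>R A" using commute_imag A by blast
  define w where "w = Complex (fst r) (A \<bullet> snd r)"
  have "r = eq A w" using sr by (simp add: eq_def w_def prod_eq_iff)
  moreover have "qn r = 1" by (simp add: r_def qn_mult p p0)
  ultimately have w1: "cmod w = 1" using A
    by (simp add: qn_def eq_def cmod_def power2_eq_square)
  have "qmult r p0 = p" by (simp add: r_def qmult_assoc qconj_mult_self p0)
  with \<open>r = eq A w\<close> w1 show ?thesis by auto
qed

lemma hopf_fibre_conv:
  "A \<bullet> A = 1 \<Longrightarrow> cmod w = 1 \<Longrightarrow> hopf A (qmult (eq A w) p) = hopf A p"
  by (simp add: hopf_mult hopf_eq_A)



definition zeta :: "real^3 \<Rightarrow> real^3 \<Rightarrow> real^3 \<Rightarrow> complex" where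
  "zeta C D v = Complex (v \<bullet> D) (v \<bullet> cross3 C D)"
definition vec :: "real^3 \<Rightarrow> real^3 \<Rightarrow> real \<Rightarrow> complex \<Rightarrow> real^3" where
  "vec C D c z = c *\<^sub>R C + Re z *\<^sub>R D + Im z *\<^sub>R cross3 C D"
definition rot :: "real^3 \<Rightarrow> complex \<Rightarrow> real^3 \<Rightarrow> real^3" where
  "rot C w v = Re w *\<^sub>R v + ((1 - Re w) * (v \<bullet> C)) *\<^sub>R C + Im w *\<^sub>R cross3 C v"

lemma id1: "cross3 C D \<bullet> cross3 C D = (C\<bullet>C)*(D\<bullet>D) - (C\<bullet>D)^2"
  by (simp add: qsimps algebra_simps power2_eq_square)
lemma id2: "cross3 (cross3 C D) w = (C\<bullet>w) *\<^sub>R D - (D\<bullet>w) *\<^sub>R C"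
  by (simp add: qsimps algebra_simps)
lemma id3: "cross3 C v \<bullet> D = - (v \<bullet> cross3 C D)"
  by (simp add: qsimps algebra_simps)
lemma id4: "cross3 C v \<bullet> cross3 C D = (C\<bullet>C)*(v\<bullet>D) - (C\<bullet>D)*(v\<bullet>C)"
  by (simp add: qsimps algebra_simps)
lemma id5: "cross3 C v \<bullet> C = 0" "C \<bullet> cross3 C D = 0" "D \<bullet> cross3 C D = 0"
  by (simp_all add: qsimps algebra_simps)

locale frame = fixes C D :: "real^3" assumes CC: "C\<bullet>C = 1" and DD: "D\<bullet>D = 1" and CD: "C\<bullet>D = 0"
begin

lemma EE: "cross3 C D \<bullet> cross3 C D = 1" using id1 CC DD CD by simp

lemma DC: "D \<bullet> C = 0" using CD by (simp add: inner_commute)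
lemma EC: "cross3 C D \<bullet> C = 0" using id5(2) by (simp add: inner_commute)
lemma ED: "cross3 C D \<bullet> D = 0" using id5(3) by (simp add: inner_commute)

lemma vec_dots: "vec C D c z \<bullet> C = c" "vec C D c z \<bullet> D = Re z" "vec C D c z \<bullet> cross3 C D = Im z"
  using CC DD CD EE id5 DC EC ED by (simp_all add: vec_def inner_add_left)

lemma zeta_vec[simp]: "zeta C D (vec C D c z) = z"
  by (simp add: zeta_def vec_dots complex_eq_iff)

lemma expand: "v = vec C D (v \<bullet> C) (zeta C D v)"
proof -
  define E where "E = cross3 C D"
  define w where "w = v - vec C D (v \<bullet> C) (zeta C D v)"
  have wC: "w \<bullet> C = 0" and wD: "w \<bullet> D = 0" and wE: "w \<bullet> E = 0"
    by (simp_all add: w_def inner_diff_left vec_dots zeta_def E_def)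
  have "cross3 E w = 0" using id2[of C D w] wC wD by (simp add: E_def inner_commute)
  hence "cross3 E (cross3 E w) = 0" by simp
  hence "w = 0" using cross_cross_id[of E w] wE EE by (simp add: E_def inner_commute)
  thus ?thesis by (simp add: w_def)
qed

lemma vec_inj: "vec C D c z = vec C D c' z' \<longleftrightarrow> c = c' \<and> z = z'"
  by (metis zeta_vec vec_dots(1))

lemma vec_dot: "vec C D c z \<bullet> vec C D c' z' = c*c' + Re z * Re z' + Im z * Im z'"
proof -
  have "vec C D c z \<bullet> vec C D c' z' = c' * (vec C D c z \<bullet> C) + Re z' * (vec C D c z \<bullet> D) + Im z' * (vec C D c z \<bullet> cross3 C D)"
    by (simp add: vec_def inner_add_right)
  thus ?thesis by (simp add: vec_dots algebra_simps)
qed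

lemma dot_coords: "u \<bullet> v = (u\<bullet>C)*(v\<bullet>C) + Re (zeta C D u * cnj (zeta C D v))"
  by (subst expand[of u], subst expand[of v]) (simp add: vec_dot vec_dots)

lemma norm_coords: "u \<bullet> u = (u\<bullet>C)^2 + (cmod (zeta C D u))^2"
  using dot_coords[of u u] by (simp add: cmod_def power2_eq_square)

lemma rot_coords: "rot C w v \<bullet> C = v \<bullet> C" "zeta C D (rot C w v) = w * zeta C D v"
  using CC CD id5 id3[of C v D] id4[of C v D]
  by (simp_all add: rot_def inner_add_left zeta_def complex_eq_iff algebra_simps inner_commute)

lemma rot_vec: "rot C w v = vec C D (v \<bullet> C) (w * zeta C D v)"
  by (subst expand[of "rot C w v"]) (simp add: rot_coords)

lemma vec_lin: "vec C D (a*c + b*c') (of_real a * z + of_real b * z') = a *\<^sub>R vec C D c z + b *\<^sub>R vec C D c' z'"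
  by (simp add: vec_def algebra_simps)

lemma zeta_lin: "zeta C D (a *\<^sub>R u + b *\<^sub>R v) = of_real a * zeta C D u + of_real b * zeta C D v"
  by (simp add: zeta_def complex_eq_iff inner_add_left)

lemma zeta_C: "zeta C D C = 0"
  using CD id5 by (simp add: zeta_def complex_eq_iff inner_commute)

end

lemma exists_perp:
  assumes "C \<bullet> C = (1::real)" shows "\<exists>D::real^3. D \<bullet> D = 1 \<and> C \<bullet> D = 0"
proof (cases "vector [-(C$2), C$1, 0] = (0::real^3)")
  case True
  hence "C$1 = 0" by (simp add: vec_eq_iff forall_3 vector_def)
  then show ?thesis by (intro exI[of _ "axis 1 1"]) (simp add: inner_axis)
next
  case False
  define d :: "real^3" where "d = vector [-(C$2), C$1, 0]"
  have "C \<bullet> d = 0" by (simp add: d_def inner_vec_def sum_3 vector_def algebra_simps)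
  moreover have "d \<bullet> d \<noteq> 0" using False d_def by simp
  ultimately show ?thesis
    by (intro exI[of _ "(1/norm d) *\<^sub>R d"]) (simp add: power2_norm_eq_inner[symmetric] inner_commute power2_eq_square)
qed



definition Mq :: "real^3 \<Rightarrow> real^3 \<Rightarrow> quat \<Rightarrow> complex \<Rightarrow> quat" where
  "Mq A C p w = ((1 + Re w)/2) *\<^sub>R p - ((1 - Re w)/2) *\<^sub>R qmult (qmult (0,A) p) (0,C)
     + (Im w / 2) *\<^sub>R (qmult (0,A) p - qmult p (0,C))"

lemma half_id: "qmult (qmult (c, s *\<^sub>R A) p) (c, -(s *\<^sub>R C)) =
   (c^2) *\<^sub>R p - (s^2) *\<^sub>R qmult (qmult (0,A) p) (0,C) + (c* s) *\<^sub>R (qmult (0,A) p - qmult p (0,C))"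
  by (simp add: qsimps algebra_simps power2_eq_square)

lemma Mq_half:
  assumes "c^2 + s^2 = 1"
  shows "Mq A C p (Complex (c^2 - s^2) (2 * c * s)) = qmult (qmult (c, s *\<^sub>R A) p) (c, -(s *\<^sub>R C))"
proof -
  have e1: "(1 + (c^2 - s^2))/2 = c^2" and e2: "(1 - (c^2 - s^2))/2 = s^2" and e3: "2 * c * s/2 = c * s"
    using assms by auto
  have "Mq A C p (Complex (c^2 - s^2) (2 * c * s)) = 
     (c^2) *\<^sub>R p - (s^2) *\<^sub>R qmult (qmult (0,A) p) (0,C) + (c * s) *\<^sub>R (qmult (0,A) p - qmult p (0,C))"
    by (simp only: Mq_def complex.sel e1 e2 e3)
  thus ?thesis by (simp add: half_id)
qed

lemma hopf_rotC: "hopf x (c, -(s *\<^sub>R C)) = (c^2 - s^2*(C\<bullet>C)) *\<^sub>R x + (2* s^2*(C\<bullet>x)) *\<^sub>R C + (2*c* s) *\<^sub>R cross3 C x"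
  by (simp add: hopf_def qsimps algebra_simps power2_eq_square)

lemma circle_half:
  assumes "cmod w = 1"
  obtains c s where "c^2 + s^2 = 1" "w = Complex (c^2 - s^2) (2*c* s)"
proof -
  have "w \<noteq> 0" using assms by auto
  hence "cis (Arg w) = w" using assms by (simp add: cis_Arg complex_sgn_def)
  define t where "t = Arg w"
  have "w = Complex (cos t) (sin t)" using \<open>cis (Arg w) = w\<close> by (simp add: t_def cis.ctr)
  also have "\<dots> = Complex ((cos (t/2))^2 - (sin (t/2))^2) (2 * cos (t/2) * sin (t/2))"
    using cos_double[of "t/2"] sin_double[of "t/2"] by simp
  finally show ?thesis using that[of "cos (t/2)" "sin (t/2)"] by simp
qed

lemma hopf_Mq:
  assumes A: "A \<bullet> A = 1" and C: "C \<bullet> C = 1" and w: "cmod w = 1"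
  shows "hopf A (Mq A C p w) = rot C w (hopf A p)"
proof -
  obtain c s where cs: "c^2 + s^2 = 1" and wd: "w = Complex (c^2 - s^2) (2*c* s)"
    using circle_half[OF w] by blast
  have u: "hopf A (c, s *\<^sub>R A) = A"
    using hopf_eq_A[OF A, of "Complex c s"] cs by (simp add: eq_def cmod_def)
  have "hopf A (Mq A C p w) = hopf (hopf A p) (c, -(s *\<^sub>R C))"
    by (simp add: wd Mq_half[OF cs] hopf_mult u)
  also have "\<dots> = rot C w (hopf A p)"
  proof -
    have c2: "c^2 = 1 - s^2" using cs by simp
    show ?thesis using C by (simp add: hopf_rotC rot_def wd inner_commute algebra_simps c2)
  qed
  finally show ?thesis .
qed

lemma qn_Mq:
  assumes A: "A \<bullet> A = 1" and C: "C \<bullet> C = 1" and w: "cmod w = 1" and p: "qn p = 1"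
  shows "qn (Mq A C p w) = 1"
proof -
  obtain c s where cs: "c^2 + s^2 = 1" and wd: "w = Complex (c^2 - s^2) (2*c* s)"
    using circle_half[OF w] by blast
  have "qn (c, s *\<^sub>R A) = 1" "qn (c, -(s *\<^sub>R C)) = 1" using cs A C by (simp_all add: qn_def power2_eq_square)
  thus ?thesis using p by (simp add: wd Mq_half[OF cs] qn_mult)
qed

lemma cont_qmult[continuous_intros]:
  fixes f g :: "'a::t2_space \<Rightarrow> quat"
  shows "continuous_on S f \<Longrightarrow> continuous_on S g \<Longrightarrow> continuous_on S (\<lambda>x. qmult (f x) (g x))"
  unfolding qmult_def by (intro continuous_intros continuous_on_cross)

lemma cont_eq[continuous_intros]:
  "continuous_on S f \<Longrightarrow> continuous_on S (\<lambda>x. eq A (f x))"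
  unfolding eq_def by (intro continuous_intros)

lemma cont_Mq[continuous_intros]:
  "continuous_on S f \<Longrightarrow> continuous_on S (\<lambda>x. Mq A C p (f x))"
  unfolding Mq_def by (intro continuous_intros) auto

lemma cont_rot[continuous_intros]:
  "continuous_on S f \<Longrightarrow> continuous_on S (\<lambda>x. rot C (f x) v)"
  unfolding rot_def by (intro continuous_intros)

lemma hopf_surj:
  assumes A: "A \<bullet> A = 1" and X: "X \<bullet> X = 1"
  shows "\<exists>p. qn p = 1 \<and> hopf A p = X"
proof (cases "A \<bullet> X = -1")
  case True
  obtain D where D: "D \<bullet> D = 1" "A \<bullet> D = 0" using exists_perp[OF A] by blast
  have "(X + A) \<bullet> (X + A) = 0" using True A X by (simp add: inner_add_left inner_add_right inner_commute)
  hence "X = -A" by (simp add: eq_neg_iff_add_eq_0)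
  moreover have "hopf A (0, D) = -A" using D by (simp add: hopf_formula inner_commute)
  ultimately show ?thesis using D by (intro exI[of _ "(0,D)"]) (simp add: qn_def)
next
  case False
  define k where "k = A \<bullet> X"
  have k1: "k^2 \<le> 1" using Cauchy_Schwarz_ineq[of A X] A X by (simp add: k_def)
  hence "\<bar>k\<bar> \<le> 1" by (simp add: abs_square_le_1)
  hence "k \<ge> -1" by linarith
  hence kp: "1 + k > 0" using False k_def by auto
  define u where "u = - cross3 A X"
  have uu: "u \<bullet> u = 1 - k^2" using id1[of A X] A X by (simp add: u_def k_def)
  have uA: "u \<bullet> A = 0" using id5(2)[of A X] by (simp add: u_def inner_commute)
  have cc: "cross3 A (cross3 A X) = k *\<^sub>R A - X" using cross_cross_id[of A X] A by (simp add: k_def)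
  have "hopf A (1+k,u) = ((1+k)^2 - (1-k^2)) *\<^sub>R A + (2*(1+k)) *\<^sub>R (X - k *\<^sub>R A)"
    using uu uA by (simp add: hopf_formula u_def cc)
  moreover have "(1+k)^2 - (1-k^2) = 2*(1+k)*k" by (simp add: power2_eq_square algebra_simps)
  ultimately have h: "hopf A (1 + k, u) = (2*(1+k)) *\<^sub>R X"
    by (simp add: scaleR_diff_right)
  have q: "qn (1 + k, u) = 2*(1+k)" using uu by (simp add: qn_def power2_eq_square algebra_simps)
  define c where "c = 1 / sqrt (2*(1+k))"
  have c2: "c^2 = 1/(2*(1+k))" using kp by (simp add: c_def power_divide)
  have "qn (c *\<^sub>R (1 + k, u)) = c^2 * qn (1+k,u)" by (simp add: qn_def power2_eq_square algebra_simps)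
  hence "qn (c *\<^sub>R (1 + k, u)) = 1" using q c2 kp by simp
  moreover have "hopf A (c *\<^sub>R (1 + k, u)) = X"
  proof -
    have "hopf A (c *\<^sub>R (1 + k, u)) = c^2 *\<^sub>R hopf A (1 + k, u)" by (rule hopf_scale)
    also have "\<dots> = X" using h c2 kp by simp
    finally show ?thesis .
  qed
  ultimately show ?thesis by blast
qed



lemma w_cnj: "cmod (w::complex) = 1 \<Longrightarrow> w * a * cnj (w * b) = a * cnj b"
  by (smt (verit, del_insts) complex_cnj_cnj complex_cnj_mult div_by_1
    divide_conv_cnj divide_divide_eq_right mult.commute norm_zero one_eq_divide_iff)

lemma w_cnj_solve: "cmod (w::complex) = 1 \<Longrightarrow> w * cnj q' = cnj q \<Longrightarrow> q' = w * q"
  by (smt (verit, best) complex_cnj_cancel_iff complex_cnj_mult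
    divide_conv_cnj mult.commute nonzero_mult_div_cancel_left norm_eq_zero)

lemma real_mult_iff: "Im (a * cnj b) = 0 \<Longrightarrow> b \<noteq> 0 \<Longrightarrow> \<exists>k::real. a = of_real k * b"
  by (metis Im_complex_div_eq_0 Im_complex_of_real Re_complex_of_real
    complex.expand mult.commute nonzero_mult_div_cancel_left times_divide_eq_right)

lemma conj_rot: "a \<noteq> 0 \<Longrightarrow> Im (a * cnj b) = 0 \<Longrightarrow> cnj a / a * b = cnj b"
  by (smt (verit, ccfv_SIG) cnj.simps(1,2) complex_cnj_cnj complex_cnj_mult
    complex_eq_iff mult.commute nonzero_mult_div_cancel_left times_divide_eq_right)

lemma conj_rot_ex:
  assumes "Im (a * cnj b) = 0" "a \<noteq> 0 \<or> b \<noteq> 0"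
  shows "\<exists>w. cmod w = 1 \<and> cnj a = w * a \<and> cnj b = w * b"
proof (cases "a = 0")
  case False
  thus ?thesis using conj_rot[OF False assms(1)]
    by (intro exI[of _ "cnj a / a"]) (simp add: norm_divide)
next
  case True
  hence "b \<noteq> 0" using assms by simp
  moreover have "Im (b * cnj a) = 0" using True by simp
  ultimately show ?thesis using conj_rot[of b a] True
    by (intro exI[of _ "cnj b / b"]) (simp add: norm_divide)
qed

lemma cmatch1:
  assumes "cmod p' = cmod p" "cmod q' = cmod q" "p' * cnj q' = p * cnj q"
  shows "\<exists>w. cmod w = 1 \<and> p' = w * p \<and> q' = w * q"
proof (cases "p = 0")
  case False
  define w where "w = p' / p"
  have w1: "cmod w = 1" using assms(1) False by (simp add: w_def norm_divide)
  have pp: "p' = w * p" using False by (simp add: w_def)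
  have "p * (w * cnj q') = p * cnj q" using assms(3) pp by (simp add: ac_simps)
  hence "w * cnj q' = cnj q" using False by simp
  hence "q' = w * q" using w_cnj_solve w1 by blast
  thus ?thesis using w1 pp by blast
next
  case True
  hence p'0: "p' = 0" using assms(1) by simp
  show ?thesis
  proof (cases "q = 0")
    case True thus ?thesis using assms(2) p'0 \<open>p=0\<close> by (intro exI[of _ 1]) simp
  next
    case False
    define w where "w = q' / q"
    have "cmod w = 1" using assms(2) False by (simp add: w_def norm_divide)
    thus ?thesis using False p'0 \<open>p=0\<close> by (intro exI[of _ w]) (simp add: w_def)
  qed
qed

lemma cmatch:
  assumes "cmod p' = cmod p" "cmod q' = cmod q" "Re (p' * cnj q') = Re (p * cnj q)"
  shows "\<exists>w. cmod w = 1 \<and> ((p' = w*p \<and> q' = w*q) \<or> (p' = w * cnj p \<and> q' = w * cnj q))"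
proof -
  have "cmod (p' * cnj q') = cmod (p * cnj q)" using assms by (simp add: norm_mult)
  hence "(Re (p' * cnj q'))^2 + (Im (p' * cnj q'))^2 = (Re (p * cnj q))^2 + (Im (p * cnj q))^2"
    by (simp add: cmod_def)
  hence "(Im (p' * cnj q'))^2 = (Im (p * cnj q))^2" using assms(3) by simp
  hence "Im (p' * cnj q') = Im (p * cnj q) \<or> Im (p' * cnj q') = - Im (p * cnj q)"
    by (simp add: power2_eq_iff)
  thus ?thesis
  proof
    assume "Im (p' * cnj q') = Im (p * cnj q)"
    hence "p' * cnj q' = p * cnj q" using assms(3) by (simp add: complex_eq_iff)
    from cmatch1[OF assms(1,2) this] show ?thesis by blast
  next
    assume "Im (p' * cnj q') = - Im (p * cnj q)"
    hence "p' * cnj q' = cnj p * cnj (cnj q)" using assms(3) by (simp add: complex_eq_iff)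
    from cmatch1[of p' "cnj p" q' "cnj q"] assms this show ?thesis by auto
  qed
qed

definition rfl :: "real^3 \<Rightarrow> real^3 \<Rightarrow> real^3 \<Rightarrow> real^3" where
  "rfl C D v = vec C D (v \<bullet> C) (cnj (zeta C D v))"

definition GG :: "real \<times> real \<times> real \<Rightarrow> real" where
  "GG t = 1 + 2 * fst t * fst (snd t) * snd (snd t) - (fst t)^2 - (fst (snd t))^2 - (snd (snd t))^2"

lemma circle_iff[simp]: "w \<in> circle \<longleftrightarrow> cmod w = 1"
  by (simp add: circle_def)

context frame begin

lemma rfl_coords: "rfl C D v \<bullet> C = v \<bullet> C" "zeta C D (rfl C D v) = cnj (zeta C D v)"
  by (simp_all add: rfl_def vec_dots)

lemma rot_dot: "cmod w = 1 \<Longrightarrow> rot C w u \<bullet> rot C w v = u \<bullet> v"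
proof -
  assume w: "cmod w = 1"
  have e: "w * zeta C D u * cnj (w * zeta C D v) = zeta C D u * cnj (zeta C D v)" by (rule w_cnj[OF w])
  show ?thesis by (simp only: dot_coords[of "rot C w u" "rot C w v"] dot_coords[of u v] rot_coords e)
qed

lemma rfl_dot: "rfl C D u \<bullet> rfl C D v = u \<bullet> v"
proof -
  have "Re (cnj (zeta C D u) * cnj (cnj (zeta C D v))) = Re (zeta C D u * cnj (zeta C D v))"
    by simp
  thus ?thesis by (simp add: dot_coords[of "rfl C D u"] dot_coords[of u v] rfl_coords)
qed

lemma rot_comp: "rot C w (rot C w' v) = rot C (w * w') v"
  by (simp add: rot_vec[of w "rot C w' v"] rot_vec[of "w*w'" v] rot_coords mult.assoc)

lemma rot_eq_iff: "rot C w u = rot C w' u \<longleftrightarrow> w * zeta C D u = w' * zeta C D u"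
  by (simp add: rot_vec vec_inj)

lemma cmod_zeta: "u \<bullet> u = 1 \<Longrightarrow> (cmod (zeta C D u))^2 = 1 - (u \<bullet> C)^2"
  using norm_coords[of u] by simp

lemma fibre_char:
  assumes x: "x \<bullet> x = 1" and y: "y \<bullet> y = 1"
  shows "nubar_fibre C (nubar C x y) = {(u,v). \<exists>w. cmod w = 1 \<and>
     ((u = rot C w x \<and> v = rot C w y) \<or> (u = rot C w (rfl C D x) \<and> v = rot C w (rfl C D y)))}"
     (is "?L = ?R")
proof
  show "?L \<subseteq> ?R"
  proof clarify
    fix u v assume "(u, v) \<in> ?L"
    hence u: "u \<bullet> u = 1" and v: "v \<bullet> v = 1" and e1: "u \<bullet> v = x \<bullet> y" and e2: "u \<bullet> C = x \<bullet> C"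
      and e3: "v \<bullet> C = y \<bullet> C"
      by (auto simp: nubar_fibre_def nubar_def S2_iff)
    have m1: "cmod (zeta C D u) = cmod (zeta C D x)"
      using cmod_zeta[OF u] cmod_zeta[OF x] e2 by (metis norm_ge_zero power2_eq_imp_eq)
    have m2: "cmod (zeta C D v) = cmod (zeta C D y)"
      using cmod_zeta[OF v] cmod_zeta[OF y] e3 by (metis norm_ge_zero power2_eq_imp_eq)
    have m3: "Re (zeta C D u * cnj (zeta C D v)) = Re (zeta C D x * cnj (zeta C D y))"
      using dot_coords[of u v] dot_coords[of x y] e1 e2 e3 by simp
    obtain w where w: "cmod w = 1" and
      cs: "(zeta C D u = w * zeta C D x \<and> zeta C D v = w * zeta C D y) \<or>
           (zeta C D u = w * cnj (zeta C D x) \<and> zeta C D v = w * cnj (zeta C D y))"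
      using cmatch[OF m1 m2 m3] by blast
    have uu: "u = vec C D (x \<bullet> C) (zeta C D u)" using expand[of u] e2 by simp
    have vv: "v = vec C D (y \<bullet> C) (zeta C D v)" using expand[of v] e3 by simp
    from cs show "\<exists>w. cmod w = 1 \<and> ((u = rot C w x \<and> v = rot C w y) \<or>
       (u = rot C w (rfl C D x) \<and> v = rot C w (rfl C D y)))"
    proof
      assume "zeta C D u = w * zeta C D x \<and> zeta C D v = w * zeta C D y"
      thus ?thesis using w uu vv by (intro exI[of _ w]) (simp add: rot_vec)
    next
      assume "zeta C D u = w * cnj (zeta C D x) \<and> zeta C D v = w * cnj (zeta C D y)"
      thus ?thesis using w uu vv by (intro exI[of _ w]) (simp add: rot_vec rfl_coords)
    qed
  qed
next
  show "?R \<subseteq> ?L"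
  proof clarify
    fix u v w assume w: "cmod w = 1" and
      h: "u = rot C w x \<and> v = rot C w y \<or> u = rot C w (rfl C D x) \<and> v = rot C w (rfl C D y)"
    from h show "(u, v) \<in> ?L"
    proof
      assume "u = rot C w x \<and> v = rot C w y"
      thus ?thesis using w x y by (auto simp: nubar_fibre_def nubar_def S2_iff rot_dot rot_coords)
    next
      assume "u = rot C w (rfl C D x) \<and> v = rot C w (rfl C D y)"
      thus ?thesis using w x y
        by (auto simp: nubar_fibre_def nubar_def S2_iff rot_dot rot_coords rfl_dot rfl_coords)
    qed
  qed
qed

lemma zeta_scale: "zeta C D (k *\<^sub>R v) = of_real k * zeta C D v"
  by (simp add: zeta_def complex_eq_iff)

lemma zeta_diff: "zeta C D (u - v) = zeta C D u - zeta C D v"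
  by (simp add: zeta_def complex_eq_iff inner_diff_left)

lemma span_C: "v \<in> span {C} \<longleftrightarrow> zeta C D v = 0"
proof
  assume "v \<in> span {C}"
  then obtain k where "v = k *\<^sub>R C" by (auto simp: span_singleton)
  thus "zeta C D v = 0" by (simp add: zeta_scale zeta_C)
next
  assume "zeta C D v = 0"
  hence "v = (v \<bullet> C) *\<^sub>R C" using expand[of v] by (simp add: vec_def)
  thus "v \<in> span {C}" by (metis span_base span_scale singletonI)
qed

lemma span_yC:
  assumes "zeta C D y \<noteq> 0"
  shows "x \<in> span {y, C} \<longleftrightarrow> Im (zeta C D x * cnj (zeta C D y)) = 0"
proof
  assume "x \<in> span {y, C}"
  then obtain k where "x - k *\<^sub>R y \<in> span {C}" by (auto simp: span_insert)
  hence "zeta C D x = of_real k * zeta C D y" by (simp add: span_C zeta_diff zeta_scale)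
  thus "Im (zeta C D x * cnj (zeta C D y)) = 0" by simp
next
  assume "Im (zeta C D x * cnj (zeta C D y)) = 0"
  then obtain k where "zeta C D x = of_real k * zeta C D y" using real_mult_iff assms by blast
  hence "x - k *\<^sub>R y \<in> span {C}" by (simp add: span_C zeta_diff zeta_scale)
  thus "x \<in> span {y, C}" by (auto simp: span_insert)
qed

lemma dim_cases:
  "dim (span {x, y, C}) = (if zeta C D y = 0 then (if zeta C D x = 0 then 1 else 2)
      else (if Im (zeta C D x * cnj (zeta C D y)) = 0 then 2 else 3))"
proof -
  have C0: "C \<noteq> 0" using CC by auto
  have d1: "dim {C} = 1" using C0 dim_insert[of C "{}"] by (simp add: span_empty)
  have d2: "dim {y, C} = (if zeta C D y = 0 then 1 else 2)"
    using dim_insert[of y "{C}"] d1 span_C by simp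
  have d3: "dim {x, y, C} = dim {y, C} + (if x \<in> span {y, C} then 0 else 1)"
    using dim_insert[of x "{y, C}"] by simp
  show ?thesis
  proof (cases "zeta C D y = 0")
    case True
    hence "span {y, C} = span {C}" using span_C span_redundant by blast
    hence "x \<in> span {y, C} \<longleftrightarrow> zeta C D x = 0" using span_C by simp
    thus ?thesis using True d2 d3 by (simp add: dim_span)
  next
    case False
    thus ?thesis using d2 d3 span_yC[OF False] by (simp add: dim_span)
  qed
qed

lemma GG_nubar:
  assumes x: "x \<bullet> x = 1" and y: "y \<bullet> y = 1"
  shows "GG (nubar C x y) = (Im (zeta C D x * cnj (zeta C D y)))^2"
proof -
  define b where "b = x \<bullet> C"
  define c where "c = y \<bullet> C"
  define r where "r = zeta C D x * cnj (zeta C D y)"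
  have xy: "x \<bullet> y = b * c + Re r" using dot_coords[of x y] by (simp add: b_def c_def r_def)
  have "(cmod r)^2 = (1 - b^2) * (1 - c^2)"
    using cmod_zeta[OF x] cmod_zeta[OF y] by (simp add: r_def norm_mult power_mult_distrib b_def c_def)
  hence e: "(Re r)^2 + (Im r)^2 = (1 - b^2) * (1 - c^2)" by (simp add: cmod_power2)
  have "GG (nubar C x y) = (1 - b^2) * (1 - c^2) - (Re r)^2"
    by (simp add: GG_def nubar_def xy b_def[symmetric] c_def[symmetric] power2_eq_square algebra_simps)
  thus ?thesis using e by (simp add: r_def)
qed

lemma Delta_GG: "t \<in> Delta C \<Longrightarrow> GG t \<ge> 0"
  by (auto simp: Delta_def S2_iff GG_nubar)

lemma Delta_big: "{t. (fst (snd t))^2 < 1 \<and> 0 < GG t} \<subseteq> Delta C"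
proof clarify
  fix t1 t2 t3 :: real assume h1: "(fst (snd (t1,t2,t3)))^2 < 1" and h2: "0 < GG (t1,t2,t3)"
  define s1 where "s1 = sqrt (1 - t2^2)"
  have s1p: "s1 > 0" using h1 by (simp add: s1_def)
  have s1s: "s1^2 = 1 - t2^2" using h1 by (simp add: s1_def)
  define r where "r = (t1 - t2 * t3) / s1"
  have rr: "s1^2 * r^2 = (t1 - t2 * t3)^2" using s1p by (simp add: r_def power_divide)
  have "s1^2 * (1 - t3^2 - r^2) = (1 - t2^2)*(1 - t3^2) - (t1 - t2 * t3)^2"
    using rr s1s by (simp add: right_diff_distrib)
  also have "\<dots> = GG (t1,t2,t3)" by (simp add: GG_def power2_eq_square algebra_simps)
  finally have "s1^2 * (1 - t3^2 - r^2) = GG (t1,t2,t3)" .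
  hence nn: "1 - t3^2 - r^2 \<ge> 0" using h2 s1p
    by (metis less_eq_real_def zero_less_mult_pos zero_less_power)
  define x where "x = vec C D t2 (of_real s1)"
  define y where "y = vec C D t3 (Complex r (sqrt (1 - t3^2 - r^2)))"
  have "x \<bullet> x = 1" using s1s by (simp add: x_def vec_dot power2_eq_square)
  moreover have "y \<bullet> y = 1" using nn by (simp add: y_def vec_dot power2_eq_square[symmetric])
  moreover have "x \<bullet> y = t1" using s1p by (simp add: x_def y_def vec_dot r_def)
  moreover have "x \<bullet> C = t2" "y \<bullet> C = t3" by (simp_all add: x_def y_def vec_dots)
  ultimately show "(t1,t2,t3) \<in> Delta C"
    unfolding Delta_def by (intro image_eqI[of _ _ "(x,y)"]) (auto simp: nubar_def S2_iff)
qed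

end



lemma homeo_one:
  fixes f :: "'a::t2_space \<Rightarrow> 'b::t2_space"
  assumes "compact S" "continuous_on S f" "inj_on f S"
  shows "f ` S homeomorphic S"
  using homeomorphism_compact[OF assms(1,2) refl assms(3)] homeomorphic_def homeomorphic_sym by blast

lemma homeo_two:
  fixes f1 f2 :: "'a::metric_space \<Rightarrow> 'b::real_normed_vector"
  assumes S: "compact S" and c1: "continuous_on S f1" and c2: "continuous_on S f2"
    and i1: "inj_on f1 S" and i2: "inj_on f2 S" and d: "\<And>s s'. s \<in> S \<Longrightarrow> s' \<in> S \<Longrightarrow> f1 s \<noteq> f2 s'"
  shows "(f1 ` S \<union> f2 ` S) homeomorphic (S \<times> {0::real, 1})"
proof -
  define h where "h = (\<lambda>x::'a \<times> real. (1 - snd x) *\<^sub>R f1 (fst x) + snd x *\<^sub>R f2 (fst x))"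
  have K: "compact (S \<times> {0::real,1})" using S by (intro compact_Times) auto
  have a: "continuous_on (S \<times> {0::real,1}) (\<lambda>x. f1 (fst x))"
    by (rule continuous_on_compose2[OF c1 continuous_on_fst]) auto
  have b: "continuous_on (S \<times> {0::real,1}) (\<lambda>x. f2 (fst x))"
    by (rule continuous_on_compose2[OF c2 continuous_on_fst]) auto
  have hc: "continuous_on (S \<times> {0::real,1}) h"
    unfolding h_def by (intro continuous_intros a b)
  have h0: "h (s, 0) = f1 s" and h1: "h (s, 1) = f2 s" for s by (simp_all add: h_def)
  have hi: "h ` (S \<times> {0,1}) = f1 ` S \<union> f2 ` S"
  proof
    show "h ` (S \<times> {0,1}) \<subseteq> f1 ` S \<union> f2 ` S" using h0 h1 by auto
    show "f1 ` S \<union> f2 ` S \<subseteq> h ` (S \<times> {0,1})"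
    proof
      fix z assume "z \<in> f1 ` S \<union> f2 ` S"
      then obtain s where s: "s \<in> S" and zz: "z = f1 s \<or> z = f2 s" by auto
      from zz show "z \<in> h ` (S \<times> {0,1})"
      proof
        assume "z = f1 s" thus ?thesis using s by (intro image_eqI[of _ _ "(s,0)"]) (simp_all add: h0)
      next
        assume "z = f2 s" thus ?thesis using s by (intro image_eqI[of _ _ "(s,1)"]) (simp_all add: h1)
      qed
    qed
  qed
  have inj: "inj_on h (S \<times> {0,1})"
  proof (rule inj_onI)
    fix x x' assume x: "x \<in> S \<times> {0::real,1}" and x': "x' \<in> S \<times> {0::real,1}" and e: "h x = h x'"
    obtain s k where sk: "x = (s,k)" "s \<in> S" "k = 0 \<or> k = 1" using x by auto
    obtain s' k' where sk': "x' = (s',k')" "s' \<in> S" "k' = 0 \<or> k' = 1" using x' by auto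
    from sk(3) show "x = x'"
    proof
      assume k: "k = 0"
      from sk'(3) show ?thesis
      proof
        assume k': "k' = 0"
        hence "f1 s = f1 s'" using e sk sk' k h0 by simp
        hence "s = s'" using inj_onD[OF i1 _ sk(2) sk'(2)] by blast
        thus ?thesis using sk sk' k k' by simp
      next
        assume k': "k' = 1"
        hence "f1 s = f2 s'" using e sk sk' k h0 h1 by simp
        thus ?thesis using d sk(2) sk'(2) by blast
      qed
    next
      assume k: "k = 1"
      from sk'(3) show ?thesis
      proof
        assume k': "k' = 0"
        hence "f1 s' = f2 s" using e sk sk' k h0 h1 by simp
        thus ?thesis using d sk(2) sk'(2) by blast
      next
        assume k': "k' = 1"
        hence "f2 s = f2 s'" using e sk sk' k h1 by simp
        hence "s = s'" using inj_onD[OF i2 _ sk(2) sk'(2)] by blast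
        thus ?thesis using sk sk' k k' by simp
      qed
    qed
  qed
  show ?thesis using homeo_one[OF K hc inj] hi by simp
qed

lemmas cI = continuous_on_Pair cont_qmult cont_eq cont_Mq cont_rot continuous_on_fst continuous_on_snd continuous_on_const continuous_on_id

definition Psi :: "real^3 \<Rightarrow> real^3 \<Rightarrow> real^3 \<Rightarrow> quat \<Rightarrow> quat \<Rightarrow> complex \<times> complex \<times> complex \<Rightarrow> quat \<times> quat" where
  "Psi A B C p0 q0 W = (qmult (eq A (fst W)) (Mq A C p0 (snd (snd W))),
                        qmult (eq B (fst (snd W))) (Mq B C q0 (snd (snd W))))"

definition orb :: "real^3 \<Rightarrow> real^3 \<Rightarrow> real^3 \<Rightarrow> ((real^3) \<times> (real^3)) set" where
  "orb C x y = (\<lambda>w. (rot C w x, rot C w y)) ` circle"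

definition Phi :: "real^3 \<Rightarrow> real^3 \<Rightarrow> quat \<Rightarrow> quat \<Rightarrow> complex \<times> complex \<Rightarrow> quat \<times> quat" where
  "Phi A B p0 q0 W = (qmult (eq A (fst W)) p0, qmult (eq B (snd W)) q0)"

lemma cont_Phi: "continuous_on S (Phi A B p0 q0)"
proof -
  have e: "Phi A B p0 q0 = (\<lambda>W. (qmult (eq A (fst W)) p0, qmult (eq B (snd W)) q0))"
    by (rule ext) (simp add: Phi_def)
  show ?thesis unfolding e by (intro cI)
qed

lemma cont_Psi: "continuous_on S (Psi A B C p0 q0)"
proof -
  have e: "Psi A B C p0 q0 = (\<lambda>W. (qmult (eq A (fst W)) (Mq A C p0 (snd (snd W))),
                        qmult (eq B (fst (snd W))) (Mq B C q0 (snd (snd W)))))"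
    by (rule ext) (simp add: Psi_def)
  show ?thesis unfolding e by (intro cI)
qed

lemma eq_inj: "A \<bullet> A = 1 \<Longrightarrow> eq A w = eq A w' \<Longrightarrow> w = w'"
proof -
  assume A: "A \<bullet> A = 1" and e: "eq A w = eq A w'"
  have "A \<noteq> 0" using A by auto
  thus ?thesis using e by (simp add: eq_def complex_eq_iff scaleR_cancel_right)
qed

lemma nu_fibre_eq:
  assumes A: "A \<bullet> A = 1" and B: "B \<bullet> B = 1"
  shows "nu_fibre A B C z = {(p,q). qn p = 1 \<and> qn q = 1 \<and> (hopf A p, hopf B q) \<in> nubar_fibre C z}"
proof -
  have hA: "qn p = 1 \<Longrightarrow> hopf A p \<in> S2" for p using A by (simp add: hopf_dot S2_iff)
  have hB: "qn p = 1 \<Longrightarrow> hopf B p \<in> S2" for p using B by (simp add: hopf_dot S2_iff)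
  show ?thesis
  proof (rule set_eqI)
    fix z' :: "quat \<times> quat"
    obtain p q where z': "z' = (p,q)" by (cases z')
    show "z' \<in> nu_fibre A B C z \<longleftrightarrow> z' \<in> {(p,q). qn p = 1 \<and> qn q = 1 \<and> (hopf A p, hopf B q) \<in> nubar_fibre C z}"
      using hA[of p] hB[of q] by (auto simp: z' nu_fibre_def nubar_fibre_def nu_def S3_iff)
  qed
qed

lemma Phi_props:
  assumes A: "A \<bullet> A = 1" and B: "B \<bullet> B = 1" and p0: "qn p0 = 1" and q0: "qn q0 = 1"
  shows "continuous_on (circle \<times> circle) (Phi A B p0 q0)"
    "inj_on (Phi A B p0 q0) (circle \<times> circle)"
    "Phi A B p0 q0 ` (circle \<times> circle) =
       {(p,q). qn p = 1 \<and> qn q = 1 \<and> hopf A p = hopf A p0 \<and> hopf B q = hopf B q0}"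
proof -
  show "continuous_on (circle \<times> circle) (Phi A B p0 q0)"
    by (rule cont_Phi)
  show "inj_on (Phi A B p0 q0) (circle \<times> circle)"
  proof (rule inj_onI)
    fix W W' assume "W \<in> circle \<times> circle" "W' \<in> circle \<times> circle" and e: "Phi A B p0 q0 W = Phi A B p0 q0 W'"
    have "qmult (eq A (fst W)) p0 = qmult (eq A (fst W')) p0" using e by (simp add: Phi_def)
    hence 1: "eq A (fst W) = eq A (fst W')" by (rule qcancel_right[OF p0])
    have "qmult (eq B (snd W)) q0 = qmult (eq B (snd W')) q0" using e by (simp add: Phi_def)
    hence 2: "eq B (snd W) = eq B (snd W')" by (rule qcancel_right[OF q0])
    have "fst W = fst W'" using eq_inj[OF A 1] .
    moreover have "snd W = snd W'" using eq_inj[OF B 2] .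
    ultimately show "W = W'" by (rule prod_eqI)
  qed
  show "Phi A B p0 q0 ` (circle \<times> circle) =
       {(p,q). qn p = 1 \<and> qn q = 1 \<and> hopf A p = hopf A p0 \<and> hopf B q = hopf B q0}"
  proof
    show "Phi A B p0 q0 ` (circle \<times> circle) \<subseteq> {(p,q). qn p = 1 \<and> qn q = 1 \<and> hopf A p = hopf A p0 \<and> hopf B q = hopf B q0}"
    proof
      fix z assume "z \<in> Phi A B p0 q0 ` (circle \<times> circle)"
      then obtain w1 w2 where z: "z = Phi A B p0 q0 (w1,w2)" and w: "cmod w1 = 1" "cmod w2 = 1" by auto
      have "qn (fst z) = 1" "qn (snd z) = 1" "hopf A (fst z) = hopf A p0" "hopf B (snd z) = hopf B q0"
        using w A B p0 q0 by (simp_all add: z Phi_def qn_mult qn_eq hopf_fibre_conv)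
      thus "z \<in> {(p,q). qn p = 1 \<and> qn q = 1 \<and> hopf A p = hopf A p0 \<and> hopf B q = hopf B q0}"
        by (cases z) simp
    qed
    show "{(p,q). qn p = 1 \<and> qn q = 1 \<and> hopf A p = hopf A p0 \<and> hopf B q = hopf B q0} \<subseteq> Phi A B p0 q0 ` (circle \<times> circle)"
    proof clarify
      fix p q assume h: "qn p = 1" "qn q = 1" "hopf A p = hopf A p0" "hopf B q = hopf B q0"
      obtain w1 where w1: "cmod w1 = 1" "p = qmult (eq A w1) p0" using hopf_fibre[OF A h(1) p0 h(3)] by blast
      obtain w2 where w2: "cmod w2 = 1" "q = qmult (eq B w2) q0" using hopf_fibre[OF B h(2) q0 h(4)] by blast
      show "(p, q) \<in> Phi A B p0 q0 ` (circle \<times> circle)"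
        using w1 w2 by (intro image_eqI[of _ _ "(w1,w2)"]) (auto simp: Phi_def)
    qed
  qed
qed

context frame begin

lemma orb_props:
  assumes nz: "zeta C D x0 \<noteq> 0 \<or> zeta C D y0 \<noteq> 0"
  shows "continuous_on circle (\<lambda>w. (rot C w x0, rot C w y0))"
    "inj_on (\<lambda>w. (rot C w x0, rot C w y0)) circle"
proof -
  show "continuous_on circle (\<lambda>w. (rot C w x0, rot C w y0))" by (intro cI)
  show "inj_on (\<lambda>w. (rot C w x0, rot C w y0)) circle"
  proof (rule inj_onI)
    fix w w' assume "w \<in> circle" "w' \<in> circle" and e: "(rot C w x0, rot C w y0) = (rot C w' x0, rot C w' y0)"
    hence "w * zeta C D x0 = w' * zeta C D x0" "w * zeta C D y0 = w' * zeta C D y0"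
      by (simp_all add: rot_eq_iff)
    thus "w = w'" using nz by auto
  qed
qed

lemma Psi_props:
  assumes A: "A \<bullet> A = 1" and B: "B \<bullet> B = 1"
    and nz: "zeta C D x0 \<noteq> 0 \<or> zeta C D y0 \<noteq> 0"
    and p0: "qn p0 = 1" "hopf A p0 = x0" and q0: "qn q0 = 1" "hopf B q0 = y0"
  shows "continuous_on (circle \<times> circle \<times> circle) (Psi A B C p0 q0)"
    "inj_on (Psi A B C p0 q0) (circle \<times> circle \<times> circle)"
    "Psi A B C p0 q0 ` (circle \<times> circle \<times> circle) =
       {(p,q). qn p = 1 \<and> qn q = 1 \<and> (hopf A p, hopf B q) \<in> orb C x0 y0}"
proof -
  have hA: "hopf A (qmult (eq A w1) (Mq A C p0 w)) = rot C w x0" if "cmod w1 = 1" "cmod w = 1" for w1 w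
    using that A CC p0 by (simp add: hopf_fibre_conv hopf_Mq)
  have hB: "hopf B (qmult (eq B w1) (Mq B C q0 w)) = rot C w y0" if "cmod w1 = 1" "cmod w = 1" for w1 w
    using that B CC q0 by (simp add: hopf_fibre_conv hopf_Mq)
  have qA: "qn (Mq A C p0 w) = 1" if "cmod w = 1" for w using qn_Mq[OF A CC that p0(1)] .
  have qB: "qn (Mq B C q0 w) = 1" if "cmod w = 1" for w using qn_Mq[OF B CC that q0(1)] .
  show "continuous_on (circle \<times> circle \<times> circle) (Psi A B C p0 q0)"
    by (rule cont_Psi)
  show "inj_on (Psi A B C p0 q0) (circle \<times> circle \<times> circle)"
  proof (rule inj_onI)
    fix W W' assume W: "W \<in> circle \<times> circle \<times> circle" and W': "W' \<in> circle \<times> circle \<times> circle"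
      and e: "Psi A B C p0 q0 W = Psi A B C p0 q0 W'"
    obtain w1 w2 w3 where Wd: "W = (w1,w2,w3)" "cmod w1 = 1" "cmod w2 = 1" "cmod w3 = 1" using W by auto
    obtain v1 v2 v3 where Wd': "W' = (v1,v2,v3)" "cmod v1 = 1" "cmod v2 = 1" "cmod v3 = 1" using W' by auto
    have e1: "qmult (eq A w1) (Mq A C p0 w3) = qmult (eq A v1) (Mq A C p0 v3)"
     and e2: "qmult (eq B w2) (Mq B C q0 w3) = qmult (eq B v2) (Mq B C q0 v3)"
      using e Wd Wd' by (simp_all add: Psi_def)
    have "rot C w3 x0 = rot C v3 x0" using hA[of w1 w3] hA[of v1 v3] e1 Wd Wd' by simp
    moreover have "rot C w3 y0 = rot C v3 y0" using hB[of w2 w3] hB[of v2 v3] e2 Wd Wd' by simp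
    ultimately have "w3 * zeta C D x0 = v3 * zeta C D x0" "w3 * zeta C D y0 = v3 * zeta C D y0"
      by (simp_all add: rot_eq_iff)
    hence "w3 = v3" using nz by auto
    have m1: "qn (Mq A C p0 w3) = 1" using qA Wd by simp
    have m2: "qn (Mq B C q0 w3) = 1" using qB Wd by simp
    have "qmult (eq A w1) (Mq A C p0 w3) = qmult (eq A v1) (Mq A C p0 w3)" using e1 \<open>w3 = v3\<close> by simp
    hence "eq A w1 = eq A v1" by (rule qcancel_right[OF m1])
    moreover have "qmult (eq B w2) (Mq B C q0 w3) = qmult (eq B v2) (Mq B C q0 w3)" using e2 \<open>w3 = v3\<close> by simp
    hence "eq B w2 = eq B v2" by (rule qcancel_right[OF m2])
    ultimately have "w1 = v1" "w2 = v2" using eq_inj[OF A] eq_inj[OF B] by blast+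
    thus "W = W'" using Wd Wd' \<open>w3 = v3\<close> by simp
  qed
  show "Psi A B C p0 q0 ` (circle \<times> circle \<times> circle) =
       {(p,q). qn p = 1 \<and> qn q = 1 \<and> (hopf A p, hopf B q) \<in> orb C x0 y0}"
  proof
    show "Psi A B C p0 q0 ` (circle \<times> circle \<times> circle) \<subseteq>
       {(p,q). qn p = 1 \<and> qn q = 1 \<and> (hopf A p, hopf B q) \<in> orb C x0 y0}"
    proof
      fix z assume "z \<in> Psi A B C p0 q0 ` (circle \<times> circle \<times> circle)"
      then obtain w1 w2 w3 where z: "z = Psi A B C p0 q0 (w1,w2,w3)" and
        w: "cmod w1 = 1" "cmod w2 = 1" "cmod w3 = 1" by auto
      have "(hopf A (fst z), hopf B (snd z)) \<in> orb C x0 y0"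
        unfolding orb_def using w(3) by (intro image_eqI[of _ _ w3]) (simp_all add: z Psi_def hA hB w)
      moreover have "qn (fst z) = 1" "qn (snd z) = 1" using w qA qB A B
        by (simp_all add: z Psi_def qn_mult qn_eq)
      ultimately show "z \<in> {(p,q). qn p = 1 \<and> qn q = 1 \<and> (hopf A p, hopf B q) \<in> orb C x0 y0}"
        by (cases z) auto
    qed
    show "{(p,q). qn p = 1 \<and> qn q = 1 \<and> (hopf A p, hopf B q) \<in> orb C x0 y0} \<subseteq>
       Psi A B C p0 q0 ` (circle \<times> circle \<times> circle)"
    proof clarify
      fix p q assume p: "qn p = 1" and q: "qn q = 1" and o: "(hopf A p, hopf B q) \<in> orb C x0 y0"
      obtain w where w: "cmod w = 1" "hopf A p = rot C w x0" "hopf B q = rot C w y0"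
        using o by (auto simp: orb_def)
      have "hopf A p = hopf A (Mq A C p0 w)" using w A CC p0 by (simp add: hopf_Mq)
      then obtain w1 where w1: "cmod w1 = 1" "p = qmult (eq A w1) (Mq A C p0 w)"
        using hopf_fibre[OF A p qA[OF w(1)]] by blast
      have "hopf B q = hopf B (Mq B C q0 w)" using w B CC q0 by (simp add: hopf_Mq)
      then obtain w2 where w2: "cmod w2 = 1" "q = qmult (eq B w2) (Mq B C q0 w)"
        using hopf_fibre[OF B q qB[OF w(1)]] by blast
      show "(p, q) \<in> Psi A B C p0 q0 ` (circle \<times> circle \<times> circle)"
        using w w1 w2 by (intro image_eqI[of _ _ "(w1,w2,w)"]) (auto simp: Psi_def)
    qed
  qed
qed

end


context frame begin

lemma nubar_Delta: "x \<bullet> x = 1 \<Longrightarrow> y \<bullet> y = 1 \<Longrightarrow> nubar C x y \<in> Delta C"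
  unfolding Delta_def by (rule image_eqI[of _ _ "(x,y)"]) (auto simp: S2_iff)

lemma frontier_part:
  assumes x: "x \<bullet> x = 1" and y: "y \<bullet> y = 1" and k: "Im (zeta C D x * cnj (zeta C D y)) = 0"
  shows "nubar C x y \<in> frontier (Delta C)"
proof -
  define a where "a = x \<bullet> y"
  define b where "b = x \<bullet> C"
  define c where "c = y \<bullet> C"
  define R where "R = Re (zeta C D x * cnj (zeta C D y))"
  have aR: "a - b * c = R" using dot_coords[of x y] by (simp add: a_def b_def c_def R_def)
  have G0: "GG (a,b,c) = 0" using GG_nubar[OF x y] k by (simp add: nubar_def a_def b_def c_def)
  have "nubar C x y \<notin> interior (Delta C)"
  proof
    assume "nubar C x y \<in> interior (Delta C)"
    then obtain e where e: "e > 0" "ball (a,b,c) e \<subseteq> Delta C"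
      by (auto simp: mem_interior nubar_def a_def b_def c_def)
    define t where "t = (if R \<ge> 0 then e/2 else - e/2)"
    have tR: "R * t \<ge> 0"
    proof (cases "R \<ge> 0")
      case True thus ?thesis using e by (simp add: t_def)
    next
      case False
      hence "R * e < 0" using e by (simp add: mult_neg_pos)
      thus ?thesis using False by (simp add: t_def)
    qed
    have t0: "t \<noteq> 0" using e by (simp add: t_def)
    have "dist (a,b,c) (a + t, b, c) = \<bar>t\<bar>" by (simp add: dist_norm norm_Pair)
    also have "\<bar>t\<bar> < e" using e by (simp add: t_def)
    finally have "(a + t, b, c) \<in> Delta C" using e by auto
    hence "GG (a + t, b, c) \<ge> 0" by (rule Delta_GG)
    moreover have "GG (a + t, b, c) = GG (a,b,c) - 2 * (a - b * c) * t - t^2"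
      by (simp add: GG_def power2_eq_square algebra_simps)
    ultimately have "0 \<le> - 2 * (R * t) - t^2" using G0 aR by simp
    moreover have "t^2 > 0" using t0 by simp
    ultimately show False using tR by linarith
  qed
  moreover have "nubar C x y \<in> closure (Delta C)" using nubar_Delta[OF x y] closure_subset by blast
  ultimately show ?thesis by (simp add: frontier_def)
qed

lemma interior_part:
  assumes x: "x \<bullet> x = 1" and y: "y \<bullet> y = 1" and k: "Im (zeta C D x * cnj (zeta C D y)) \<noteq> 0"
  shows "nubar C x y \<in> interior (Delta C)"
proof -
  define U where "U = {t::real\<times>real\<times>real. (fst (snd t))^2 < 1 \<and> 0 < GG t}"
  have "open U"
    unfolding U_def GG_def
    by (intro open_Collect_conj open_Collect_less continuous_intros)
  moreover have "U \<subseteq> Delta C" using Delta_big by (simp add: U_def)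
  moreover have "nubar C x y \<in> U"
  proof -
    have "zeta C D x \<noteq> 0" using k by auto
    hence "(cmod (zeta C D x))^2 > 0" by simp
    hence "(x \<bullet> C)^2 < 1" using cmod_zeta[OF x] by simp
    moreover have "GG (nubar C x y) > 0" using GG_nubar[OF x y] k by simp
    ultimately show ?thesis by (simp add: U_def nubar_def)
  qed
  ultimately show ?thesis using interior_maximal by blast
qed

end

theorem mainTheorem8:
  fixes A B C x y :: "real^3"
  assumes "A \<in> S2" and "B \<in> S2" and "C \<in> S2"
    and "x \<in> S2" and "y \<in> S2"
  shows "(dim (span {x, y, C}) = 1 \<longrightarrow>
            nubar C x y \<in> Vset \<and>
            nubar_fibre C (nubar C x y) = {(x, y)} \<and>
            is_2torus (nu_fibre A B C (nubar C x y)))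
       \<and> (dim (span {x, y, C}) = 2 \<longrightarrow>
            nubar C x y \<in> frontier (Delta C) - Vset \<and>
            is_circle (nubar_fibre C (nubar C x y)) \<and>
            is_3torus (nu_fibre A B C (nubar C x y)))
       \<and> (dim (span {x, y, C}) = 3 \<longrightarrow>
            nubar C x y \<in> interior (Delta C) \<and>
            is_two_circles (nubar_fibre C (nubar C x y)) \<and>
            is_two_3tori (nu_fibre A B C (nubar C x y)))
       \<and> nubar C C C = (1, 1, 1) \<and> nubar C C (- C) = (-1, 1, -1)
       \<and> nubar C (- C) C = (-1, -1, 1) \<and> nubar C (- C) (- C) = (1, -1, -1)"
proof -
  have A: "A \<bullet> A = 1" and B: "B \<bullet> B = 1" and C1: "C \<bullet> C = 1" and x: "x \<bullet> x = 1" and y: "y \<bullet> y = 1"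
    using assms by (simp_all add: S2_iff)
  obtain D where D: "D \<bullet> D = 1" "C \<bullet> D = 0" using exists_perp[OF C1] by blast
  interpret frame C D using C1 D by unfold_locales
  define zx where "zx = zeta C D x"
  define zy where "zy = zeta C D y"
  define k where "k = Im (zx * cnj zy)"
  have dimeq: "dim (span {x,y,C}) = (if zy = 0 then (if zx = 0 then 1 else 2) else (if k = 0 then 2 else 3))"
    using dim_cases[of x y] by (simp add: zx_def zy_def k_def)
  have NF: "nu_fibre A B C (nubar C x y) = {(p,q). qn p = 1 \<and> qn q = 1 \<and> (hopf A p, hopf B q) \<in> nubar_fibre C (nubar C x y)}"
    by (rule nu_fibre_eq[OF A B])
  have FC: "nubar_fibre C (nubar C x y) = {(u,v). \<exists>w. cmod w = 1 \<and> ((u = rot C w x \<and> v = rot C w y) \<or> (u = rot C w (rfl C D x) \<and> v = rot C w (rfl C D y)))}"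
    by (rule fibre_char[OF x y])
  have FCorb: "nubar_fibre C (nubar C x y) = orb C x y \<union> orb C (rfl C D x) (rfl C D y)"
    unfolding FC orb_def by auto
  obtain p0 where p0: "qn p0 = 1" "hopf A p0 = x" using hopf_surj[OF A x] by blast
  obtain q0 where q0: "qn q0 = 1" "hopf B q0 = y" using hopf_surj[OF B y] by blast
  have cT1: "compact circle" unfolding circle_def by (rule compact_sphere)
  have cT2: "compact (circle \<times> circle)" by (rule compact_Times[OF cT1 cT1])
  have cT3: "compact (circle \<times> circle \<times> circle)" by (rule compact_Times[OF cT1 cT2])
  have rfl_unit: "rfl C D x \<bullet> rfl C D x = 1" "rfl C D y \<bullet> rfl C D y = 1" using x y by (simp_all add: rfl_dot)

  have P1: "dim (span {x, y, C}) = 1 \<longrightarrow>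
            nubar C x y \<in> Vset \<and>
            nubar_fibre C (nubar C x y) = {(x, y)} \<and>
            is_2torus (nu_fibre A B C (nubar C x y))"
  proof (rule impI)
    assume h: "dim (span {x, y, C}) = 1"
    have dd: "(if zy = 0 then (if zx = 0 then 1 else 2) else (if k = 0 then 2 else 3)) = (1::nat)"
      using trans[OF dimeq[symmetric] h] .
    from dd have z0: "zx = 0" "zy = 0" by (auto split: if_splits)
    have z0': "zeta C D x = 0" "zeta C D y = 0" using z0 by (simp_all add: zx_def zy_def)
    have xe: "vec C D (x \<bullet> C) 0 = x" by (rule expand[of x, symmetric, unfolded z0'(1)])
    have ye: "vec C D (y \<bullet> C) 0 = y" by (rule expand[of y, symmetric, unfolded z0'(2)])
    have b1: "(x \<bullet> C)^2 = 1" using cmod_zeta[OF x] z0 by (simp add: zx_def)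
    have c1: "(y \<bullet> C)^2 = 1" using cmod_zeta[OF y] z0 by (simp add: zy_def)
    have xy: "x \<bullet> y = (x \<bullet> C) * (y \<bullet> C)" using dot_coords[of x y] z0 by (simp add: zx_def zy_def)
    have V: "nubar C x y \<in> Vset"
      using b1 c1 xy by (auto simp: Vset_def nubar_def power2_eq_1_iff)
    have rx: "rot C w x = x" "rot C w y = y" for w
      by (simp_all add: rot_vec z0' xe ye)
    have fx: "rfl C D x = x" "rfl C D y = y"
      by (simp_all add: rfl_def z0' xe ye)
    have F1: "nubar_fibre C (nubar C x y) = {(x, y)}"
      unfolding FC rx fx by (auto intro: exI[of _ 1])
    have "nu_fibre A B C (nubar C x y) = {(p,q). qn p = 1 \<and> qn q = 1 \<and> hopf A p = hopf A p0 \<and> hopf B q = hopf B q0}"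
      unfolding NF F1 p0(2) q0(2) by auto
    also have "\<dots> = Phi A B p0 q0 ` (circle \<times> circle)" using Phi_props(3)[OF A B p0(1) q0(1)] by simp
    finally have "is_2torus (nu_fibre A B C (nubar C x y))"
      unfolding is_2torus_def using homeo_one[OF cT2 Phi_props(1,2)[OF A B p0(1) q0(1)]] by simp
    thus "nubar C x y \<in> Vset \<and> nubar_fibre C (nubar C x y) = {(x, y)} \<and> is_2torus (nu_fibre A B C (nubar C x y))"
      using V F1 by simp
  qed

  have P2: "dim (span {x, y, C}) = 2 \<longrightarrow>
            nubar C x y \<in> frontier (Delta C) - Vset \<and>
            is_circle (nubar_fibre C (nubar C x y)) \<and>
            is_3torus (nu_fibre A B C (nubar C x y))"
  proof (rule impI)
    assume h: "dim (span {x, y, C}) = 2"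
    have dd: "(if zy = 0 then (if zx = 0 then 1 else 2) else (if k = 0 then 2 else 3)) = (2::nat)"
      using trans[OF dimeq[symmetric] h] .
    from dd have k0: "k = 0" and nz: "zx \<noteq> 0 \<or> zy \<noteq> 0" by (auto split: if_splits simp: k_def)
    obtain w0 where w0: "cmod w0 = 1" "cnj zx = w0 * zx" "cnj zy = w0 * zy"
      using conj_rot_ex[of zx zy] k0 nz by (auto simp: k_def)
    have rf: "rfl C D x = rot C w0 x" "rfl C D y = rot C w0 y"
      using w0 by (simp_all add: rfl_def rot_vec zx_def zy_def)
    have "orb C (rfl C D x) (rfl C D y) \<subseteq> orb C x y"
    proof (rule subsetI)
      fix z assume "z \<in> orb C (rfl C D x) (rfl C D y)"
      then obtain w where w: "cmod w = 1" "z = (rot C w (rfl C D x), rot C w (rfl C D y))" by (auto simp: orb_def)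
      hence "z = (rot C (w * w0) x, rot C (w * w0) y)" by (simp add: rf rot_comp)
      moreover have "cmod (w * w0) = 1" using w w0 by (simp add: norm_mult)
      ultimately show "z \<in> orb C x y" unfolding orb_def by auto
    qed
    hence F2: "nubar_fibre C (nubar C x y) = orb C x y" using FCorb by blast
    have nz': "zeta C D x \<noteq> 0 \<or> zeta C D y \<noteq> 0" using nz by (simp add: zx_def zy_def)
    have circ: "is_circle (nubar_fibre C (nubar C x y))"
      unfolding is_circle_def F2 orb_def using homeo_one[OF cT1 orb_props[OF nz']] by simp
    have "nu_fibre A B C (nubar C x y) = Psi A B C p0 q0 ` (circle \<times> circle \<times> circle)"
      unfolding NF F2 using Psi_props(3)[OF A B nz' p0 q0] by simp
    hence tor: "is_3torus (nu_fibre A B C (nubar C x y))"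
      unfolding is_3torus_def using homeo_one[OF cT3 Psi_props(1,2)[OF A B nz' p0 q0]] by simp
    have fr: "nubar C x y \<in> frontier (Delta C)" using frontier_part[OF x y] k0 by (simp add: k_def zx_def zy_def)
    have nV: "nubar C x y \<notin> Vset"
    proof (rule notI)
      assume "nubar C x y \<in> Vset"
      hence "(x \<bullet> C)^2 = 1" "(y \<bullet> C)^2 = 1" by (auto simp: Vset_def nubar_def)
      hence "cmod zx = 0" "cmod zy = 0" using cmod_zeta[OF x] cmod_zeta[OF y] by (simp_all add: zx_def zy_def)
      thus False using nz by simp
    qed
    show "nubar C x y \<in> frontier (Delta C) - Vset \<and> is_circle (nubar_fibre C (nubar C x y)) \<and>
          is_3torus (nu_fibre A B C (nubar C x y))" using fr nV circ tor by simp
  qed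

  have P3: "dim (span {x, y, C}) = 3 \<longrightarrow>
            nubar C x y \<in> interior (Delta C) \<and>
            is_two_circles (nubar_fibre C (nubar C x y)) \<and>
            is_two_3tori (nu_fibre A B C (nubar C x y))"
  proof (rule impI)
    assume h: "dim (span {x, y, C}) = 3"
    have dd: "(if zy = 0 then (if zx = 0 then 1 else 2) else (if k = 0 then 2 else 3)) = (3::nat)"
      using trans[OF dimeq[symmetric] h] .
    from dd have k0: "k \<noteq> 0" by (auto split: if_splits)
    hence nz: "zx \<noteq> 0" "zy \<noteq> 0" by (auto simp: k_def)
    have nz1: "zeta C D x \<noteq> 0 \<or> zeta C D y \<noteq> 0" using nz by (simp add: zx_def)
    have nz2: "zeta C D (rfl C D x) \<noteq> 0 \<or> zeta C D (rfl C D y) \<noteq> 0" using nz by (simp add: rfl_coords zx_def)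
    have I1: "Im (zeta C D u * cnj (zeta C D v)) = k" if uv: "(u,v) \<in> orb C x y" for u v
    proof -
      obtain w where w: "cmod w = 1" "u = rot C w x" "v = rot C w y" using uv by (auto simp: orb_def)
      have "zeta C D u * cnj (zeta C D v) = w * zx * cnj (w * zy)" by (simp add: w rot_coords zx_def zy_def)
      also have "\<dots> = zx * cnj zy" by (rule w_cnj[OF w(1)])
      finally show ?thesis by (simp add: k_def)
    qed
    have I2: "Im (zeta C D u * cnj (zeta C D v)) = - k" if uv: "(u,v) \<in> orb C (rfl C D x) (rfl C D y)" for u v
    proof -
      obtain w where w: "cmod w = 1" "u = rot C w (rfl C D x)" "v = rot C w (rfl C D y)" using uv by (auto simp: orb_def)
      have "zeta C D u * cnj (zeta C D v) = w * cnj zx * cnj (w * cnj zy)" by (simp add: w rot_coords rfl_coords zx_def zy_def)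
      also have "\<dots> = cnj zx * cnj (cnj zy)" by (rule w_cnj[OF w(1)])
      finally show ?thesis by (simp add: k_def)
    qed
    have disj: "z \<notin> orb C (rfl C D x) (rfl C D y)" if zo: "z \<in> orb C x y" for z
    proof (rule notI)
      assume "z \<in> orb C (rfl C D x) (rfl C D y)"
      then obtain u v where "z = (u,v)" "(u,v) \<in> orb C x y" "(u,v) \<in> orb C (rfl C D x) (rfl C D y)"
        using zo by (cases z) auto
      hence "k = - k" using I1 I2 by metis
      thus False using k0 by simp
    qed
    have int: "nubar C x y \<in> interior (Delta C)" using interior_part[OF x y] k0 by (simp add: k_def zx_def zy_def)
    have circ: "is_two_circles (nubar_fibre C (nubar C x y))"
    proof -
      have "(orb C x y \<union> orb C (rfl C D x) (rfl C D y)) homeomorphic (circle \<times> {0::real,1})"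
        unfolding orb_def
      proof (rule homeo_two[OF cT1 orb_props(1)[OF nz1] orb_props(1)[OF nz2] orb_props(2)[OF nz1] orb_props(2)[OF nz2]])
        fix s s' assume "s \<in> circle" "s' \<in> circle"
        hence "(rot C s x, rot C s y) \<in> orb C x y" "(rot C s' (rfl C D x), rot C s' (rfl C D y)) \<in> orb C (rfl C D x) (rfl C D y)"
          by (auto simp: orb_def)
        thus "(rot C s x, rot C s y) \<noteq> (rot C s' (rfl C D x), rot C s' (rfl C D y))" using disj by metis
      qed
      thus ?thesis unfolding is_two_circles_def FCorb .
    qed
    obtain p1 where p1: "qn p1 = 1" "hopf A p1 = rfl C D x" using hopf_surj[OF A rfl_unit(1)] by blast
    obtain q1 where q1: "qn q1 = 1" "hopf B q1 = rfl C D y" using hopf_surj[OF B rfl_unit(2)] by blast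
    have im1: "Psi A B C p0 q0 ` (circle \<times> circle \<times> circle) = {(p,q). qn p = 1 \<and> qn q = 1 \<and> (hopf A p, hopf B q) \<in> orb C x y}"
      by (rule Psi_props(3)[OF A B nz1 p0 q0])
    have im2: "Psi A B C p1 q1 ` (circle \<times> circle \<times> circle) = {(p,q). qn p = 1 \<and> qn q = 1 \<and> (hopf A p, hopf B q) \<in> orb C (rfl C D x) (rfl C D y)}"
      by (rule Psi_props(3)[OF A B nz2 p1 q1])
    have NF3: "nu_fibre A B C (nubar C x y) = Psi A B C p0 q0 ` (circle \<times> circle \<times> circle) \<union> Psi A B C p1 q1 ` (circle \<times> circle \<times> circle)"
      unfolding NF FCorb im1 im2 by auto
    have tor: "is_two_3tori (nu_fibre A B C (nubar C x y))"
      unfolding is_two_3tori_def NF3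
    proof (rule homeo_two[OF cT3 Psi_props(1)[OF A B nz1 p0 q0] Psi_props(1)[OF A B nz2 p1 q1]
                     Psi_props(2)[OF A B nz1 p0 q0] Psi_props(2)[OF A B nz2 p1 q1]])
      fix s s' assume s: "s \<in> circle \<times> circle \<times> circle" and s': "s' \<in> circle \<times> circle \<times> circle"
      have "Psi A B C p0 q0 s \<in> Psi A B C p0 q0 ` (circle \<times> circle \<times> circle)" using s by blast
      hence 1: "(hopf A (fst (Psi A B C p0 q0 s)), hopf B (snd (Psi A B C p0 q0 s))) \<in> orb C x y"
        unfolding im1 by (cases "Psi A B C p0 q0 s") auto
      have "Psi A B C p1 q1 s' \<in> Psi A B C p1 q1 ` (circle \<times> circle \<times> circle)" using s' by blast
      hence 2: "(hopf A (fst (Psi A B C p1 q1 s')), hopf B (snd (Psi A B C p1 q1 s'))) \<in> orb C (rfl C D x) (rfl C D y)"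
        unfolding im2 by (cases "Psi A B C p1 q1 s'") auto
      show "Psi A B C p0 q0 s \<noteq> Psi A B C p1 q1 s'"
      proof (rule notI)
        assume "Psi A B C p0 q0 s = Psi A B C p1 q1 s'"
        thus False using 1 2 disj by metis
      qed
    qed
    show "nubar C x y \<in> interior (Delta C) \<and> is_two_circles (nubar_fibre C (nubar C x y)) \<and>
          is_two_3tori (nu_fibre A B C (nubar C x y))" using int circ tor by simp
  qed

  have P4: "nubar C C C = (1, 1, 1) \<and> nubar C C (- C) = (-1, 1, -1)
       \<and> nubar C (- C) C = (-1, -1, 1) \<and> nubar C (- C) (- C) = (1, -1, -1)"
    using C1 by (simp add: nubar_def)
  show ?thesis using P1 P2 P3 P4 by blast
qed


end
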